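(* Fix $K\ge1$ and $\alpha,\beta_1,\beta_2>0$. There exists a constant $C$ such that for all $n\ge2$ and every symmetric $0/1$ matrix $A$ of size $n\times n$ with zero diagonal, $$\max_{e\in\{1,\dots,K\}^n}\big|Q_B(e)-Q_{ML}(e)-Q_P(e)\big|\le\frac{C\log n}{n^2},$$ where $Q_P(e)=\frac1{n^2}\sum_{a:\,n_a(e)+\lfloor\alpha\rfloor\ge2}n_a(e)\log n_a(e)-\frac1n$. Consequently $\max_{e}|Q_B(e)-Q_{ML}(e)|=O(\log n/n)$.
   Context: For a labelling $e$: $n_a(e)=\#\{i:e_i=a\}$; $O_{ab}(e)=\sum_{i,j}A_{ij}1\{e_i=a,e_j=b\}$ for $a\ne b$, $O_{aa}(e)=\sum_{i<j}A_{ij}1\{e_i=e_j=a\}$; $n_{ab}(e)=n_a(e)n_b(e)$ for $a\ne b$, $n_{aa}(e)=\frac12n_a(e)(n_a(e)-1)$. Bayesian modularity: $Q_B(e)=\frac1{n^2}\sum_{1\le a\le b\le K}\log B\big(O_{ab}(e)+\beta_1,n_{ab}(e)-O_{ab}(e)+\beta_2\big)+\frac1{n^2}\sum_{a=1}^K\log\Gamma(n_a(e)+\alpha)$, $B$ the beta function. Likelihood modularity: $Q_{ML}(e)=\frac1{n^2}\sum_{1\le a\le b\le K}n_{ab}(e)\,\tau\big(O_{ab}(e)/n_{ab}(e)\big)$ with $\tau(x)=x\log x+(1-x)\log(1-x)$, $0\log0=0$, and terms with $n_{ab}(e)=0$ taken as $0$. *)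

theory Defs
  imports "HOL-Analysis.Analysis"
begin

definition labelling :: "nat \<Rightarrow> nat \<Rightarrow> (nat \<Rightarrow> nat) \<Rightarrow> bool" where
  "labelling K n e \<longleftrightarrow> (\<forall>i<n. e i \<in> {1..K})"

definition adj_matrix :: "nat \<Rightarrow> (nat \<Rightarrow> nat \<Rightarrow> real) \<Rightarrow> bool" where
  "adj_matrix n A \<longleftrightarrow> (\<forall>i<n. \<forall>j<n. A i j \<in> {0,1} \<and> A i j = A j i) \<and> (\<forall>i<n. A i i = 0)"

definition cnt :: "nat \<Rightarrow> (nat \<Rightarrow> nat) \<Rightarrow> nat \<Rightarrow> nat" where
  "cnt n e a = card {i. i < n \<and> e i = a}"

definition Ocnt :: "nat \<Rightarrow> (nat \<Rightarrow> nat \<Rightarrow> real) \<Rightarrow> (nat \<Rightarrow> nat) \<Rightarrow> nat \<Rightarrow> nat \<Rightarrow> real" where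
  "Ocnt n A e a b =
     (if a \<noteq> b then (\<Sum>i<n. \<Sum>j<n. if e i = a \<and> e j = b then A i j else 0)
      else (\<Sum>i<n. \<Sum>j<n. if i < j \<and> e i = a \<and> e j = a then A i j else 0))"

definition Ncnt :: "nat \<Rightarrow> (nat \<Rightarrow> nat) \<Rightarrow> nat \<Rightarrow> nat \<Rightarrow> real" where
  "Ncnt n e a b =
     (if a \<noteq> b then real (cnt n e a) * real (cnt n e b)
      else real (cnt n e a) * (real (cnt n e a) - 1) / 2)"

definition xlogx :: "real \<Rightarrow> real" where
  "xlogx x = (if x = 0 then 0 else x * ln x)"

definition tau :: "real \<Rightarrow> real" where
  "tau x = xlogx x + xlogx (1 - x)"

definition Q_B :: "nat \<Rightarrow> real \<Rightarrow> real \<Rightarrow> real \<Rightarrow> nat \<Rightarrow> (nat \<Rightarrow> nat \<Rightarrow> real) \<Rightarrow> (nat \<Rightarrow> nat) \<Rightarrow> real" where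
  "Q_B K \<alpha> \<beta>1 \<beta>2 n A e =
     (1 / (real n)^2) * (\<Sum>a\<in>{1..K}. \<Sum>b\<in>{a..K}.
         ln (Beta (Ocnt n A e a b + \<beta>1) (Ncnt n e a b - Ocnt n A e a b + \<beta>2)))
   + (1 / (real n)^2) * (\<Sum>a\<in>{1..K}. ln (Gamma (real (cnt n e a) + \<alpha>)))"

definition Q_ML :: "nat \<Rightarrow> nat \<Rightarrow> (nat \<Rightarrow> nat \<Rightarrow> real) \<Rightarrow> (nat \<Rightarrow> nat) \<Rightarrow> real" where
  "Q_ML K n A e =
     (1 / (real n)^2) * (\<Sum>a\<in>{1..K}. \<Sum>b\<in>{a..K}.
        (if Ncnt n e a b = 0 then 0
         else Ncnt n e a b * tau (Ocnt n A e a b / Ncnt n e a b)))"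

definition Q_P :: "nat \<Rightarrow> real \<Rightarrow> nat \<Rightarrow> (nat \<Rightarrow> nat) \<Rightarrow> real" where
  "Q_P K \<alpha> n e =
     (1 / (real n)^2) * (\<Sum>a\<in>{a\<in>{1..K}. real_of_int (int (cnt n e a) + \<lfloor>\<alpha>\<rfloor>) \<ge> 2}.
        real (cnt n e a) * ln (real (cnt n e a)))
     - 1 / real n"

end

theory Submission
  imports Defs
begin


lemma lnfact_step:
  fixes m :: nat assumes "m \<ge> 1"
  shows "0 \<le> 1 - real m * (ln (real m + 1) - ln (real m))"
    and "1 - real m * (ln (real m + 1) - ln (real m)) \<le> ln (real m + 1) - ln (real m)"
proof -
  have m0: "real m > 0" using assms by simp
  have a: "ln ((real m + 1) / real m) \<le> (real m + 1)/real m - 1"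
    by (rule ln_le_minus_one) (use m0 in simp)
  have b: "ln (real m / (real m + 1)) \<le> real m / (real m + 1) - 1"
    by (rule ln_le_minus_one) (use m0 in simp)
  have a': "ln (real m + 1) - ln (real m) \<le> 1 / real m"
    using a m0 by (simp add: ln_div field_simps)
  have b': "1 / (real m + 1) \<le> ln (real m + 1) - ln (real m)"
    using b m0 by (simp add: ln_div field_simps)
  show "0 \<le> 1 - real m * (ln (real m + 1) - ln (real m))"
    using mult_left_mono[OF a', of "real m"] m0 by simp
  have "1 \<le> (real m + 1) * (ln (real m + 1) - ln (real m))"
    using mult_left_mono[OF b', of "real m + 1"] m0 by simp
  then show "1 - real m * (ln (real m + 1) - ln (real m)) \<le> ln (real m + 1) - ln (real m)"
    by (simp add: algebra_simps)
qed

lemma lnfact_bounds: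
  fixes m :: nat assumes "m \<ge> 1"
  shows "real m * ln (real m) - real m + 1 \<le> ln (fact m :: real) \<and>
         ln (fact m :: real) \<le> real m * ln (real m) - real m + 1 + ln (real m)"
  using assms
proof (induction m rule: dec_induct)
  case base
  then show ?case by simp
next
  case (step m)
  have f: "ln (fact (Suc m) :: real) = ln (real m + 1) + ln (fact m)"
    by (simp add: ln_mult add.commute)
  note s1 = lnfact_step(1)[OF step(1)] and s2 = lnfact_step(2)[OF step(1)]
  show ?case using step(3) s1 s2 unfolding f
    by (simp add: algebra_simps)
qed

lemma ln2_half: "1 \<le> 2 * ln (real m + 2)"
proof -
  have "ln 2 \<le> ln (real m + 2)" by simp
  then show ?thesis using ln2_ge_two_thirds by linarith
qed

lemma gamma_core:
  fixes \<beta> :: real assumes bpos: "\<beta> > 0"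
  shows "\<exists>c\<ge>0. \<forall>m::nat. \<bar>ln (Gamma (real m + \<beta>)) - (xlogx (real m) - real m)\<bar> \<le> c * ln (real m + 2)"
proof -
  define j where "j = nat \<lfloor>\<beta>\<rfloor>"
  have jgt: "\<beta> < real j + 1" using bpos unfolding j_def
    by (simp add: of_nat_nat)
  define K0 where "K0 = \<bar>ln (Gamma \<beta>)\<bar> + \<bar>ln (Gamma (1 + \<beta>)) + 1\<bar>"
  define c where "c = 2 * K0 + (real j + 1) * (2 * real j + 1) + 2"
  have K0: "K0 \<ge> 0" unfolding K0_def by simp
  have c0: "c \<ge> 0" unfolding c_def using K0 by simp
  have main: "\<bar>ln (Gamma (real m + \<beta>)) - (xlogx (real m) - real m)\<bar> \<le> c * ln (real m + 2)" for m :: nat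
  proof (cases "m \<ge> 2")
    case False
    then have "m = 0 \<or> m = 1" by auto
    then have "\<bar>ln (Gamma (real m + \<beta>)) - (xlogx (real m) - real m)\<bar> \<le> K0"
      unfolding K0_def xlogx_def by (auto simp: add.commute)
    also have "K0 \<le> 2 * K0 * ln (real m + 2)" using ln2_half[of m] K0
      using mult_left_mono by fastforce
    also have "\<dots> \<le> c * ln (real m + 2)"
      by (intro mult_right_mono) (auto simp: c_def)
    finally show ?thesis .
  next
    case True
    define L where "L = ln (real m + 2)"
    have L1: "1 \<le> 2 * L" unfolding L_def by (rule ln2_half)
    have m0: "real m > 0" using True by simp
    have xl: "xlogx (real m) = real m * ln (real m)" using m0 unfolding xlogx_def by simp
    have gpos: "Gamma (real m + \<beta>) > 0" using m0 bpos by simp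
    have g1: "Gamma (real m) = fact (m - 1)"
      using Gamma_fact[of "m - 1", where 'a=real] True by (simp add: of_nat_diff)
    have "Gamma (real m) < Gamma (real m + \<beta>)"
      by (rule Gamma_real_strict_mono) (use True bpos in auto)
    then have "ln (fact (m - 1) :: real) \<le> ln (Gamma (real m + \<beta>))"
      using g1 gpos by (subst ln_le_cancel_iff) (auto simp: less_imp_le)
    moreover have "ln (fact m :: real) = ln (real m) + ln (fact (m - 1))"
    proof -
      have "fact m = (real m) * (fact (m - 1) :: real)"
        using True by (intro fact_reduce) simp
      then show ?thesis using m0 by (simp add: ln_mult)
    qed
    moreover have "real m * ln (real m) - real m + 1 \<le> ln (fact m :: real)"
      using lnfact_bounds[of m] True by simp
    moreover have "ln (real m) \<le> L" unfolding L_def using m0 by simp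
    ultimately have low: "ln (Gamma (real m + \<beta>)) - (xlogx (real m) - real m) \<ge> - L"
      unfolding xl by linarith
    define M where "M = m + j"
    have Mr: "real M = real m + real j" unfolding M_def by simp
    have M0: "real M > 0" using m0 Mr by simp
    have g2: "Gamma (real M + 1) = fact M"
      using Gamma_fact[of M, where 'a=real] by (simp add: add.commute)
    have "Gamma (real m + \<beta>) < Gamma (real M + 1)"
      by (rule Gamma_real_strict_mono) (use True bpos jgt Mr in auto)
    then have u1: "ln (Gamma (real m + \<beta>)) \<le> ln (fact M :: real)"
      using g2 gpos by simp
    have u2: "ln (fact M :: real) \<le> real M * ln (real M) - real M + 1 + ln (real M)"
      using lnfact_bounds[of M] True unfolding M_def by simp
    have "ln (real M / real m) \<le> real M / real m - 1"
      by (rule ln_le_minus_one) (use M0 m0 in simp)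
    then have "real m * (ln (real M) - ln (real m)) \<le> real j"
      using m0 M0 Mr by (simp add: ln_div field_simps)
    then have u3: "real M * ln (real M) - real M - (real m * ln (real m) - real m) \<le> real j * ln (real M)"
      using Mr by (simp add: algebra_simps)
    have "ln (real M) \<le> ln ((real m + 2) * (real j + 1))"
      using M0 Mr by (intro ln_mono) (auto simp: algebra_simps)
    also have "\<dots> = L + ln (real j + 1)" unfolding L_def by (simp add: ln_mult)
    also have "ln (real j + 1) \<le> real j" using ln_le_minus_one[of "real j + 1"] by simp
    finally have lnM: "ln (real M) \<le> L + real j" by simp
    have up0: "ln (Gamma (real m + \<beta>)) - (xlogx (real m) - real m) \<le> (real j + 1) * ln (real M) + 1"
      using u1 u2 u3 unfolding xl by (simp add: algebra_simps)
    have "(real j + 1) * ln (real M) + 1 \<le> (real j + 1) * (L + real j) + 1"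
      using lnM by (intro add_right_mono mult_left_mono) auto
    also have "\<dots> \<le> (real j + 1) * (L + real j * (2 * L)) + 2 * L"
    proof -
      have jj: "real j \<le> real j * (2 * L)" using L1 mult_left_mono[of 1 "2*L" "real j"] by simp
      then have "L + real j \<le> L + real j * (2 * L)" by simp
      then have "(real j + 1) * (L + real j) \<le> (real j + 1) * (L + real j * (2 * L))"
        by (intro mult_left_mono) auto
      then show ?thesis using L1 by linarith
    qed
    also have "\<dots> = ((real j + 1) * (2 * real j + 1) + 2) * L" by (simp add: algebra_simps)
    also have "\<dots> \<le> c * L"
      using L1 K0 by (intro mult_right_mono) (simp_all add: c_def)
    finally have up: "ln (Gamma (real m + \<beta>)) - (xlogx (real m) - real m) \<le> c * L"
      using up0 by linarith
    have "1 \<le> c" unfolding c_def using K0 by simp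
    then have "1 * L \<le> c * L" using L1 by (intro mult_right_mono) auto
    then have "L \<le> c * L" by simp
    then show ?thesis using low up unfolding L_def by linarith
  qed
  show ?thesis using c0 main by blast
qed


lemma sum_Nats: "(\<And>x. x \<in> S \<Longrightarrow> f x \<in> \<nat>) \<Longrightarrow> sum f S \<in> (\<nat> :: real set)"
  by (induction S rule: infinite_finite_induct) auto

lemma cnt_sum: "real (cnt n e a) = (\<Sum>i<n. if e i = a then 1 else (0::real))"
proof -
  have "{i. i < n \<and> e i = a} = {..<n} \<inter> {i. e i = a}" by auto
  then show ?thesis unfolding cnt_def by (simp add: sum.If_cases)
qed

lemma cnt_le: "cnt n e a \<le> n"
proof -
  have "cnt n e a \<le> card {..<n}" unfolding cnt_def by (intro card_mono) auto
  then show ?thesis by simp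
qed

lemma sum_cnt:
  assumes "labelling K n e"
  shows "(\<Sum>a\<in>{1..K}. real (cnt n e a)) = real n"
proof -
  have "(\<Sum>a\<in>{1..K}. real (cnt n e a)) = (\<Sum>a\<in>{1..K}. \<Sum>i<n. if e i = a then 1 else (0::real))"
    by (simp add: cnt_sum)
  also have "\<dots> = (\<Sum>i<n. \<Sum>a\<in>{1..K}. if e i = a then 1 else (0::real))"
    by (rule sum.swap)
  also have "\<dots> = (\<Sum>i<n. 1)"
  proof (rule sum.cong)
    fix i assume "i \<in> {..<n}"
    then have "e i \<in> {1..K}" using assms unfolding labelling_def by auto
    then show "(\<Sum>a\<in>{1..K}. if e i = a then 1 else (0::real)) = 1"
      by (simp add: sum.delta[where 'b=real] eq_commute[of "e i"])
  qed simp
  finally show ?thesis by simp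
qed

lemma A01: assumes "adj_matrix n A" "i < n" "j < n"
  shows "A i j \<in> \<nat> \<and> 0 \<le> A i j \<and> A i j \<le> 1"
proof -
  have "A i j = 0 \<or> A i j = 1" using assms unfolding adj_matrix_def by blast
  then show ?thesis by auto
qed

lemma ON_nat:
  assumes adj: "adj_matrix n A"
  shows "\<exists>ob N::nat. Ocnt n A e a b = real ob \<and> Ncnt n e a b = real N \<and> ob \<le> N \<and> N \<le> n * n"
proof -
  define Oab where "Oab = Ocnt n A e a b"
  have cnts: "(\<Sum>i<n. \<Sum>j<n. if e i = a \<and> e j = b then 1 else (0::real)) = real (cnt n e a) * real (cnt n e b)"
    for a b
    unfolding cnt_sum sum_product by (intro sum.cong refl) auto
  have "\<exists>N::nat. Ncnt n e a b = real N \<and> Oab \<le> real N \<and> N \<le> n * n"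
  proof (cases "a = b")
    case False
    have "Oab \<le> (\<Sum>i<n. \<Sum>j<n. if e i = a \<and> e j = b then 1 else (0::real))"
      unfolding Oab_def Ocnt_def using False A01[OF adj]
      by (auto intro!: sum_mono)
    then show ?thesis using False cnts[of a b] cnt_le[of n e a] cnt_le[of n e b]
      by (intro exI[of _ "cnt n e a * cnt n e b"]) (auto simp: Ncnt_def mult_le_mono)
  next
    case True
    define m where "m = cnt n e a"
    define P where "P = (\<Sum>i<n. \<Sum>j<n. if i < j \<and> e i = a \<and> e j = a then 1 else (0::real))"
    have "Oab \<le> P"
      unfolding Oab_def Ocnt_def P_def using True A01[OF adj]
      by (auto intro!: sum_mono)
    have split: "(if e i = a \<and> e j = a then 1 else (0::real)) =
      (if i < j \<and> e i = a \<and> e j = a then 1 else 0) + (if j < i \<and> e i = a \<and> e j = a then 1 else 0)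
      + (if i = j \<and> e i = a then 1 else 0)" for i j :: nat
      by (rule linorder_cases[of i j]) auto
    have sw: "(\<Sum>i<n. \<Sum>j<n. if j < i \<and> e i = a \<and> e j = a then 1 else (0::real)) = P"
      unfolding P_def by (subst sum.swap) (simp add: conj_commute)
    have dg: "(\<Sum>i<n. \<Sum>j<n. if i = j \<and> e i = a then 1 else (0::real)) = real m"
      unfolding m_def cnt_sum by (rule sum.cong) (auto simp: sum.delta)
    have "real m * real m = P + P + real m"
      using cnts[of a a] unfolding m_def[symmetric] split sum.distrib sw dg P_def by simp
    then have PN: "Ncnt n e a b = P" using True unfolding Ncnt_def m_def[symmetric] by (simp add: field_simps)
    have "P \<in> \<nat>" unfolding P_def by (intro sum_Nats) auto
    then obtain N where N: "P = real N" by (auto elim: Nats_cases)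
    have "real m * real m \<le> real n * real n" using cnt_le[of n e a] unfolding m_def
      by (intro mult_mono) auto
    then have "real N \<le> real n * real n" using \<open>real m * real m = P + P + real m\<close> N by simp
    then have "N \<le> n * n" by (simp flip: of_nat_mult)
    then show ?thesis using PN N \<open>Oab \<le> P\<close> by auto
  qed
  then obtain N where N: "Ncnt n e a b = real N" "Oab \<le> real N" "N \<le> n * n" by blast
  have "Oab \<in> \<nat>" unfolding Oab_def Ocnt_def using A01[OF adj]
    by (auto intro!: sum_Nats)
  then obtain ob where "Oab = real ob" by (auto elim: Nats_cases)
  then show ?thesis using N unfolding Oab_def by auto
qed


lemma xlogx_scale:
  assumes "N > 0" "x \<ge> 0"
  shows "N * xlogx (x / N) = xlogx x - x * ln N"
proof (cases "x = 0")
  case True then show ?thesis by (simp add: xlogx_def)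
next
  case False
  then have "x > 0" using assms by simp
  then show ?thesis using assms False by (simp add: xlogx_def ln_div algebra_simps)
qed

lemma tau_term:
  fixes ob N :: nat assumes "ob \<le> N"
  shows "(if real N = 0 then 0 else real N * tau (real ob / real N))
     = xlogx (real ob) + xlogx (real (N - ob)) - xlogx (real N)"
proof (cases "N = 0")
  case True then show ?thesis using assms by (simp add: xlogx_def)
next
  case False
  then have N0: "real N > 0" by simp
  have e1: "1 - real ob / real N = real (N - ob) / real N"
    using N0 assms by (simp add: of_nat_diff field_simps)
  have "real N * tau (real ob / real N) = real N * xlogx (real ob / real N) + real N * xlogx (real (N - ob) / real N)"
    unfolding tau_def e1 by (simp add: algebra_simps)
  also have "\<dots> = xlogx (real ob) - real ob * ln (real N) + (xlogx (real (N - ob)) - real (N - ob) * ln (real N))"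
    using N0 by (simp add: xlogx_scale)
  also have "\<dots> = xlogx (real ob) + xlogx (real (N - ob)) - real N * ln (real N)"
    using assms by (simp add: of_nat_diff algebra_simps)
  also have "real N * ln (real N) = xlogx (real N)" using N0 by (simp add: xlogx_def)
  finally show ?thesis using False by simp
qed

lemma ln_Beta:
  fixes x y :: real
  assumes "x > 0" "y > 0"
  shows "ln (Beta x y) = ln (Gamma x) + ln (Gamma y) - ln (Gamma (x + y))"
proof -
  have "Gamma x > 0" "Gamma y > 0" "Gamma (x + y) > 0" using assms by auto
  then show ?thesis unfolding Beta_def by (simp add: ln_div ln_mult)
qed

lemma beta_core:
  fixes \<beta>1 \<beta>2 :: real assumes "\<beta>1 > 0" "\<beta>2 > 0"
  shows "\<exists>c\<ge>0. \<forall>ob N::nat. ob \<le> N \<longrightarrow>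
     \<bar>ln (Beta (real ob + \<beta>1) (real N - real ob + \<beta>2))
       - (if real N = 0 then 0 else real N * tau (real ob / real N))\<bar> \<le> c * ln (real N + 2)"
proof -
  obtain c1 where c1: "c1 \<ge> 0" "\<And>m::nat. \<bar>ln (Gamma (real m + \<beta>1)) - (xlogx (real m) - real m)\<bar> \<le> c1 * ln (real m + 2)"
    using gamma_core[OF assms(1)] by blast
  obtain c2 where c2: "c2 \<ge> 0" "\<And>m::nat. \<bar>ln (Gamma (real m + \<beta>2)) - (xlogx (real m) - real m)\<bar> \<le> c2 * ln (real m + 2)"
    using gamma_core[OF assms(2)] by blast
  obtain c3 where c3: "c3 \<ge> 0" "\<And>m::nat. \<bar>ln (Gamma (real m + (\<beta>1 + \<beta>2))) - (xlogx (real m) - real m)\<bar> \<le> c3 * ln (real m + 2)"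
    using gamma_core[of "\<beta>1 + \<beta>2"] assms by auto
  have "\<bar>ln (Beta (real ob + \<beta>1) (real N - real ob + \<beta>2))
       - (if real N = 0 then 0 else real N * tau (real ob / real N))\<bar> \<le> (c1 + c2 + c3) * ln (real N + 2)"
    if obN: "ob \<le> N" for ob N :: nat
  proof -
    have d: "real N - real ob = real (N - ob)" using obN by (simp add: of_nat_diff)
    have sumarg: "real ob + \<beta>1 + (real (N - ob) + \<beta>2) = real N + (\<beta>1 + \<beta>2)"
      using obN by (simp add: of_nat_diff)
    have lb: "ln (Beta (real ob + \<beta>1) (real N - real ob + \<beta>2)) =
       ln (Gamma (real ob + \<beta>1)) + ln (Gamma (real (N - ob) + \<beta>2)) - ln (Gamma (real N + (\<beta>1 + \<beta>2)))"
      unfolding d using assms by (subst ln_Beta) (auto simp: sumarg)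
    have xs: "xlogx (real ob) - real ob + (xlogx (real (N - ob)) - real (N - ob)) - (xlogx (real N) - real N)
       = xlogx (real ob) + xlogx (real (N - ob)) - xlogx (real N)"
      using obN by (simp add: of_nat_diff)
    have "\<bar>ln (Beta (real ob + \<beta>1) (real N - real ob + \<beta>2))
       - (if real N = 0 then 0 else real N * tau (real ob / real N))\<bar>
      \<le> c1 * ln (real ob + 2) + c2 * ln (real (N - ob) + 2) + c3 * ln (real N + 2)"
      unfolding lb tau_term[OF obN] using c1(2)[of ob] c2(2)[of "N - ob"] c3(2)[of N] xs
      by linarith
    also have "\<dots> \<le> c1 * ln (real N + 2) + c2 * ln (real N + 2) + c3 * ln (real N + 2)"
      using obN c1(1) c2(1) c3(1) by (intro add_mono mult_left_mono) auto
    finally show ?thesis by (simp add: algebra_simps)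
  qed
  then show ?thesis using c1(1) c2(1) c3(1)
    by (intro exI[of _ "c1 + c2 + c3"]) auto
qed

lemma sum_abs_bound:
  assumes "finite I" "\<And>x. x \<in> I \<Longrightarrow> \<bar>f x\<bar> \<le> (M::real)"
  shows "\<bar>sum f I\<bar> \<le> real (card I) * M"
proof -
  have "\<bar>sum f I\<bar> \<le> (\<Sum>x\<in>I. \<bar>f x\<bar>)" by (rule sum_abs)
  also have "\<dots> \<le> of_nat (card I) * M" by (rule sum_bounded_above) (use assms in auto)
  finally show ?thesis by simp
qed



lemma xlogx_nat: "xlogx (real m) = real m * ln (real m)"
  by (simp add: xlogx_def)

lemma QP_sum:
  assumes "\<alpha> > 0"
  shows "(\<Sum>a\<in>{a\<in>{1..K}. real_of_int (int (cnt n e a) + \<lfloor>\<alpha>\<rfloor>) \<ge> 2}. real (cnt n e a) * ln (real (cnt n e a)))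
       = (\<Sum>a\<in>{1..K::nat}. xlogx (real (cnt n e a)))"
proof -
  have "(\<Sum>a\<in>{a\<in>{1..K}. real_of_int (int (cnt n e a) + \<lfloor>\<alpha>\<rfloor>) \<ge> 2}. real (cnt n e a) * ln (real (cnt n e a)))
     = (\<Sum>a\<in>{a\<in>{1..K}. real_of_int (int (cnt n e a) + \<lfloor>\<alpha>\<rfloor>) \<ge> 2}. xlogx (real (cnt n e a)))"
    by (simp add: xlogx_nat)
  also have "\<dots> = (\<Sum>a\<in>{1..K::nat}. xlogx (real (cnt n e a)))"
  proof (rule sum.mono_neutral_left)
  show "finite {1..K}" by simp
  show "{a\<in>{1..K}. real_of_int (int (cnt n e a) + \<lfloor>\<alpha>\<rfloor>) \<ge> 2} \<subseteq> {1..K}" by auto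
  show "\<forall>i\<in>{1..K} - {a\<in>{1..K}. real_of_int (int (cnt n e a) + \<lfloor>\<alpha>\<rfloor>) \<ge> 2}. xlogx (real (cnt n e i)) = 0"
  proof
    fix i assume i: "i \<in> {1..K} - {a\<in>{1..K}. real_of_int (int (cnt n e a) + \<lfloor>\<alpha>\<rfloor>) \<ge> 2}"
    have "\<lfloor>\<alpha>\<rfloor> \<ge> 0" using assms by simp
    then have "real_of_int \<lfloor>\<alpha>\<rfloor> \<ge> 0" by simp
    moreover have "\<not> 2 \<le> real (cnt n e i) + real_of_int \<lfloor>\<alpha>\<rfloor>" using i by auto
    ultimately have "real (cnt n e i) < 2" by linarith
    then have "cnt n e i \<le> 1" by simp
    then have "cnt n e i = 0 \<or> cnt n e i = 1" by auto
    then show "xlogx (real (cnt n e i)) = 0" by (auto simp: xlogx_def)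
  qed
  qed
  finally show ?thesis .
qed

lemma ln_bounds_n:
  fixes n :: nat assumes "n \<ge> 2"
  shows "ln (real n * real n + 2) \<le> 3 * ln (real n)" "ln (real n + 2) \<le> 2 * ln (real n)"
    "1 \<le> 2 * ln (real n)"
proof -
  have n2: "real n \<ge> 2" using assms by simp
  have "real n * real n * 2 \<le> real n * real n * real n" using n2 by (intro mult_left_mono) auto
  moreover have "4 \<le> real n * real n" using n2 mult_mono[of 2 "real n" 2 "real n"] by simp
  ultimately have a: "real n * real n + 2 \<le> real n ^ 3" by (simp add: power3_eq_cube)
  have "ln (real n * real n + 2) \<le> ln (real n ^ 3)" using a n2 by (intro ln_mono) (auto simp: add_pos_nonneg)
  also have "\<dots> = 3 * ln (real n)" using n2 by (simp add: ln_realpow)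
  finally show "ln (real n * real n + 2) \<le> 3 * ln (real n)" .
  have "real n * 2 \<le> real n * real n" using n2 by (intro mult_left_mono) auto
  then have b: "real n + 2 \<le> real n ^ 2" using n2 unfolding power2_eq_square by linarith
  have "ln (real n + 2) \<le> ln (real n ^ 2)" using b n2 by (intro ln_mono) auto
  also have "\<dots> = 2 * ln (real n)" using n2 by (simp add: ln_realpow)
  finally show "ln (real n + 2) \<le> 2 * ln (real n)" .
  have "ln 2 \<le> ln (real n)" using n2 by simp
  then show "1 \<le> 2 * ln (real n)" using ln2_ge_two_thirds by linarith
qed



lemma mlnm_nonneg: "0 \<le> real m * ln (real m)"
  by (cases m) auto

lemma ln_nat_mono: "m \<le> n \<Longrightarrow> ln (real m) \<le> ln (real n)"
proof (cases "m = 0")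
  case True
  then show ?thesis by (cases "n = 0") auto
qed auto

theorem lemma3p1:
  fixes K :: nat and \<alpha> \<beta>1 \<beta>2 :: real
  assumes "K \<ge> 1" and "\<alpha> > 0" and "\<beta>1 > 0" and "\<beta>2 > 0"
  shows "(\<exists>C::real. \<forall>n::nat. \<forall>A. n \<ge> 2 \<longrightarrow> adj_matrix n A \<longrightarrow>
            (\<forall>e. labelling K n e \<longrightarrow>
               \<bar>Q_B K \<alpha> \<beta>1 \<beta>2 n A e - Q_ML K n A e - Q_P K \<alpha> n e\<bar>
                 \<le> C * ln (real n) / (real n)^2))
       \<and> (\<exists>C::real. \<forall>n::nat. \<forall>A. n \<ge> 2 \<longrightarrow> adj_matrix n A \<longrightarrow>
            (\<forall>e. labelling K n e \<longrightarrow>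
               \<bar>Q_B K \<alpha> \<beta>1 \<beta>2 n A e - Q_ML K n A e\<bar> \<le> C * ln (real n) / real n))"
proof -
  obtain cG where cG: "cG \<ge> 0"
    "\<And>m::nat. \<bar>ln (Gamma (real m + \<alpha>)) - (xlogx (real m) - real m)\<bar> \<le> cG * ln (real m + 2)"
    using gamma_core[OF assms(2)] by blast
  obtain cB where cB: "cB \<ge> 0" "\<And>ob N::nat. ob \<le> N \<Longrightarrow>
     \<bar>ln (Beta (real ob + \<beta>1) (real N - real ob + \<beta>2))
       - (if real N = 0 then 0 else real N * tau (real ob / real N))\<bar> \<le> cB * ln (real N + 2)"
    using beta_core[OF assms(3,4)] by blast
  define C1 where "C1 = real K * (real K * (3 * cB)) + real K * (2 * cG)"
  have C1: "C1 \<ge> 0" unfolding C1_def using cB(1) cG(1) by simp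
  have part1: "\<bar>Q_B K \<alpha> \<beta>1 \<beta>2 n A e - Q_ML K n A e - Q_P K \<alpha> n e\<bar> \<le> C1 * ln (real n) / (real n)^2"
    if n2: "n \<ge> 2" and adj: "adj_matrix n A" and lab: "labelling K n e" for n A e
  proof -
    have n0: "real n > 0" using n2 by simp
    have lnn: "ln (real n) \<ge> 0" using n2 by simp
    define E where "E a b = ln (Beta (Ocnt n A e a b + \<beta>1) (Ncnt n e a b - Ocnt n A e a b + \<beta>2))
        - (if Ncnt n e a b = 0 then 0 else Ncnt n e a b * tau (Ocnt n A e a b / Ncnt n e a b))" for a b
    define G where "G a = ln (Gamma (real (cnt n e a) + \<alpha>)) - (xlogx (real (cnt n e a)) - real (cnt n e a))" for a
    define S1 where "S1 = (\<Sum>a\<in>{1..K}. \<Sum>b\<in>{a..K}. E a b)"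
    define S2 where "S2 = (\<Sum>a\<in>{1..K}. G a)"
    define X where "X = (\<Sum>a\<in>{1..K}. \<Sum>b\<in>{a..K}.
         ln (Beta (Ocnt n A e a b + \<beta>1) (Ncnt n e a b - Ocnt n A e a b + \<beta>2)))"
    define Y where "Y = (\<Sum>a\<in>{1..K}. \<Sum>b\<in>{a..K}.
        (if Ncnt n e a b = 0 then 0 else Ncnt n e a b * tau (Ocnt n A e a b / Ncnt n e a b)))"
    define Z where "Z = (\<Sum>a\<in>{1..K}. ln (Gamma (real (cnt n e a) + \<alpha>)))"
    define W where "W = (\<Sum>a\<in>{1..K}. xlogx (real (cnt n e a)))"
    have S1X: "S1 = X - Y" unfolding S1_def X_def Y_def E_def by (simp add: sum_subtractf)
    have S2Z: "S2 = Z - W + real n" unfolding S2_def Z_def W_def G_def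
      using sum_cnt[OF lab] by (simp add: sum_subtractf sum.distrib)
    have QB: "Q_B K \<alpha> \<beta>1 \<beta>2 n A e = X / (real n)^2 + Z / (real n)^2"
      unfolding Q_B_def X_def Z_def by simp
    have QML: "Q_ML K n A e = Y / (real n)^2" unfolding Q_ML_def Y_def by simp
    have QP: "Q_P K \<alpha> n e = W / (real n)^2 - 1 / real n"
      unfolding Q_P_def W_def QP_sum[OF assms(2)] by simp
    have key: "Q_B K \<alpha> \<beta>1 \<beta>2 n A e - Q_ML K n A e - Q_P K \<alpha> n e = (S1 + S2) / (real n)^2"
      unfolding QB QML QP S1X S2Z using n0 by (simp add: field_simps power2_eq_square)
    have Eb: "\<bar>E a b\<bar> \<le> 3 * cB * ln (real n)" for a b
    proof -
      obtain ob N where ON: "Ocnt n A e a b = real ob" "Ncnt n e a b = real N" "ob \<le> N" "N \<le> n * n"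
        using ON_nat[OF adj] by blast
      have "\<bar>E a b\<bar> \<le> cB * ln (real N + 2)"
        unfolding E_def ON(1,2) using cB(2)[OF ON(3)] by simp
      also have "\<dots> \<le> cB * ln (real n * real n + 2)"
        using ON(4) cB(1) by (intro mult_left_mono) (auto simp flip: of_nat_mult)
      also have "\<dots> \<le> cB * (3 * ln (real n))"
        using ln_bounds_n(1)[OF n2] cB(1) by (intro mult_left_mono) auto
      finally show ?thesis by simp
    qed
    have Gb: "\<bar>G a\<bar> \<le> 2 * cG * ln (real n)" for a
    proof -
      have "\<bar>G a\<bar> \<le> cG * ln (real (cnt n e a) + 2)" unfolding G_def by (rule cG(2))
      also have "\<dots> \<le> cG * ln (real n + 2)"
        using cnt_le[of n e a] cG(1) by (intro mult_left_mono) auto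
      also have "\<dots> \<le> cG * (2 * ln (real n))"
        using ln_bounds_n(2)[OF n2] cG(1) by (intro mult_left_mono) auto
      finally show ?thesis by simp
    qed
    have "\<bar>S1\<bar> \<le> real (card {1..K}) * (real K * (3 * cB * ln (real n)))"
      unfolding S1_def
    proof (rule sum_abs_bound)
      fix a assume a: "a \<in> {1..K}"
      have "\<bar>\<Sum>b\<in>{a..K}. E a b\<bar> \<le> real (card {a..K}) * (3 * cB * ln (real n))"
        by (rule sum_abs_bound) (auto intro: Eb)
      also have "\<dots> \<le> real K * (3 * cB * ln (real n))"
        using a cB(1) lnn by (intro mult_right_mono) auto
      finally show "\<bar>\<Sum>b\<in>{a..K}. E a b\<bar> \<le> real K * (3 * cB * ln (real n))" .
    qed simp
    then have S1b: "\<bar>S1\<bar> \<le> real K * (real K * (3 * cB)) * ln (real n)" by simp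
    have "\<bar>S2\<bar> \<le> real (card {1..K}) * (2 * cG * ln (real n))"
      unfolding S2_def by (rule sum_abs_bound) (auto intro: Gb)
    then have S2b: "\<bar>S2\<bar> \<le> real K * (2 * cG) * ln (real n)" by simp
    have "\<bar>S1 + S2\<bar> \<le> C1 * ln (real n)" using S1b S2b unfolding C1_def
      by (simp add: algebra_simps)
    then show ?thesis unfolding key using n0 by (simp add: abs_div divide_right_mono)
  qed
  have part2: "\<bar>Q_B K \<alpha> \<beta>1 \<beta>2 n A e - Q_ML K n A e\<bar> \<le> (C1 + 3) * ln (real n) / real n"
    if n2: "n \<ge> 2" and adj: "adj_matrix n A" and lab: "labelling K n e" for n A e
  proof -
    have n0: "real n > 0" and n1: "real n \<ge> 1" using n2 by auto
    have lnn: "ln (real n) \<ge> 0" using n2 by simp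
    define T where "T = (\<Sum>a\<in>{a\<in>{1..K}. real_of_int (int (cnt n e a) + \<lfloor>\<alpha>\<rfloor>) \<ge> 2}.
        real (cnt n e a) * ln (real (cnt n e a)))"
    have QP: "Q_P K \<alpha> n e = T / (real n)^2 - 1 / real n" unfolding Q_P_def T_def by simp
    have T0: "T \<ge> 0" unfolding T_def by (intro sum_nonneg) (simp add: mlnm_nonneg)
    have "T \<le> (\<Sum>a\<in>{a\<in>{1..K}. real_of_int (int (cnt n e a) + \<lfloor>\<alpha>\<rfloor>) \<ge> 2}. real (cnt n e a) * ln (real n))"
      unfolding T_def
      by (intro sum_mono mult_left_mono) (auto simp: cnt_le ln_nat_mono)
    also have "\<dots> \<le> (\<Sum>a\<in>{1..K}. real (cnt n e a) * ln (real n))"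
      using lnn by (intro sum_mono2) auto
    also have "\<dots> = real n * ln (real n)" using sum_cnt[OF lab] by (simp add: sum_distrib_right[symmetric])
    finally have T1: "T \<le> real n * ln (real n)" .
    have "\<bar>T / (real n)^2\<bar> \<le> ln (real n) / real n"
      using T0 T1 n0 by (simp add: power2_eq_square field_simps)
    moreover have "1 / real n \<le> 2 * ln (real n) / real n"
      using ln_bounds_n(3)[OF n2] n0 by (simp add: divide_right_mono)
    moreover have "3 * ln (real n) / real n = ln (real n) / real n + 2 * ln (real n) / real n"
      by (simp add: field_simps)
    moreover have "1 / real n \<ge> 0" using n0 by simp
    moreover have "\<bar>T / (real n)^2 - 1 / real n\<bar> \<le> \<bar>T / (real n)^2\<bar> + \<bar>1 / real n\<bar>"
      by (rule abs_triangle_ineq4)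
    ultimately have QPb: "\<bar>Q_P K \<alpha> n e\<bar> \<le> 3 * ln (real n) / real n"
      unfolding QP by linarith
    have "C1 * ln (real n) / (real n)^2 \<le> C1 * ln (real n) / real n"
      using C1 lnn n1 by (intro divide_left_mono) (auto simp: power2_eq_square)
    then have "\<bar>Q_B K \<alpha> \<beta>1 \<beta>2 n A e - Q_ML K n A e - Q_P K \<alpha> n e\<bar> \<le> C1 * ln (real n) / real n"
      using part1[OF n2 adj lab] by linarith
    then show ?thesis using QPb by (simp add: add_divide_distrib distrib_right)
  qed
  show ?thesis
    using part1 part2 by blast
qed


end
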